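(* Let $n\ge 10$ be even, $K_n=(V,E)$ the complete graph, and $M_1,M_2$ two different perfect matchings in $K_n$. Then $\bm{c}=\chi(M_1)-\chi(M_2)$ is a circuit of the Perfect Matching polytope $P_{\mathrm{perfmatch}}(n)=\operatorname{conv}\{\chi(M): M\text{ a perfect matching in }K_n\}$, with circuits taken with respect to the linear description $$\bm{x}(\delta(S))\ge 1\ \text{for all } S\subset V,\ |S|\text{ odd},\ |S|\ge 3;\quad \bm{x}(\delta(v))=1\ \text{for all } v\in V;\quad \bm{x}\ge\bm{0}.$$
   Context: $\chi(M)\in\{0,1\}^E$ is the characteristic vector of $M$; $\delta(S)$ is the set of edges with exactly one endpoint in $S$, $\delta(v)=\delta(\{v\})$, $\bm{x}(F)=\sum_{e\in F}x_e$. Circuits: for a polytope $P=\{\bm{x}: A\bm{x}=\bm{b},\ B\bm{x}\le \bm{d}\}$ given by a fixed linear system, a nonzero vector $\bm{g}$ is a circuit of $P$ if $A\bm{g}=\bm{0}$ and $\operatorname{supp}(B\bm{g})$ is inclusion-minimal among the sets $\operatorname{supp}(B\bm{y})$ with $A\bm{y}=\bm{0}$, $\bm{y}\neq\bm{0}$. *)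

theory Defs
  imports Complex_Main
begin

text \<open>Complete graph K_n on vertex set V = {0..<n}; edges are 2-element subsets of V.
  Vectors in R^E are functions from vertex sets to reals vanishing outside E.\<close>

definition verts :: "nat \<Rightarrow> nat set" where
  "verts n = {0..<n}"

definition edges :: "nat \<Rightarrow> nat set set" where
  "edges n = {e. e \<subseteq> verts n \<and> card e = 2}"

definition delta :: "nat \<Rightarrow> nat set \<Rightarrow> nat set set" where
  "delta n S = {e \<in> edges n. card (e \<inter> S) = 1}"

definition xsum :: "(nat set \<Rightarrow> real) \<Rightarrow> nat set set \<Rightarrow> real" where
  "xsum x F = (\<Sum>e\<in>F. x e)"

definition perfect_matching :: "nat \<Rightarrow> nat set set \<Rightarrow> bool" where
  "perfect_matching n M \<longleftrightarrow> M \<subseteq> edges n \<and> (\<forall>v\<in>verts n. card {e\<in>M. v \<in> e} = 1)"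

definition chi :: "nat set set \<Rightarrow> nat set \<Rightarrow> real" where
  "chi M = (\<lambda>e. if e \<in> M then 1 else 0)"

definition is_vec :: "nat \<Rightarrow> (nat set \<Rightarrow> real) \<Rightarrow> bool" where
  "is_vec n y \<longleftrightarrow> (\<forall>e. e \<notin> edges n \<longrightarrow> y e = 0)"

text \<open>Inequality rows B: Inl S for the odd-set constraints x(delta(S)) >= 1
  (S a proper subset of V, |S| odd, |S| >= 3), Inr e for nonnegativity x_e >= 0.\<close>
definition ineq_rows :: "nat \<Rightarrow> (nat set + nat set) set" where
  "ineq_rows n = Inl ` {S. S \<subset> verts n \<and> odd (card S) \<and> card S \<ge> 3} \<union> Inr ` edges n"

text \<open>Value of row r of B applied to y (up to sign, which does not affect support).\<close>
fun row_val :: "nat \<Rightarrow> (nat set \<Rightarrow> real) \<Rightarrow> nat set + nat set \<Rightarrow> real" where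
  "row_val n y (Inl S) = xsum y (delta n S)"
| "row_val n y (Inr e) = y e"

definition supp_B :: "nat \<Rightarrow> (nat set \<Rightarrow> real) \<Rightarrow> (nat set + nat set) set" where
  "supp_B n y = {r \<in> ineq_rows n. row_val n y r \<noteq> 0}"

definition in_ker :: "nat \<Rightarrow> (nat set \<Rightarrow> real) \<Rightarrow> bool" where
  "in_ker n y \<longleftrightarrow> is_vec n y \<and> (\<forall>v\<in>verts n. xsum y (delta n {v}) = 0)"

definition is_circuit :: "nat \<Rightarrow> (nat set \<Rightarrow> real) \<Rightarrow> bool" where
  "is_circuit n g \<longleftrightarrow> in_ker n g \<and> g \<noteq> (\<lambda>_. 0) \<and>
     \<not> (\<exists>y. in_ker n y \<and> y \<noteq> (\<lambda>_. 0) \<and> supp_B n y \<subset> supp_B n g)"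

end

theory Submission
  imports Defs
begin

lemma finite_edges: "finite (edges n)"
proof -
  have "edges n \<subseteq> Pow (verts n)" by (auto simp: edges_def)
  then show ?thesis by (rule finite_subset) (simp add: verts_def)
qed

lemma delta1: "delta n {v} = {g\<in>edges n. v\<in>g}"
  by (auto simp: delta_def Int_insert_right split: if_splits)

lemma ident:
  assumes fS: "finite S" and k: "\<forall>v\<in>S. xsum z (delta n {v}) = 0"
  shows "xsum z (delta n S) = -2 * sum z {g\<in>edges n. g\<subseteq>S}"
proof -
  have fin: "finite (edges n)" by (rule finite_edges)
  have "0 = (\<Sum>v\<in>S. \<Sum>g\<in>edges n. if v\<in>g then z g else 0)"
    using k fin by (simp add: xsum_def delta1 sum.inter_filter)
  also have "\<dots> = (\<Sum>g\<in>edges n. \<Sum>v\<in>S. if v\<in>g then z g else 0)"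
    by (rule sum.swap)
  also have "\<dots> = (\<Sum>g\<in>edges n. z g * card (S \<inter> g))"
  proof (rule sum.cong[OF refl])
    fix g
    have "(\<Sum>v\<in>S. if v\<in>g then z g else 0) = sum (\<lambda>_. z g) {v\<in>S. v\<in>g}"
      using fS by (rule sum.inter_filter[symmetric])
    also have "{v\<in>S. v\<in>g} = S \<inter> g" by auto
    finally show "(\<Sum>v\<in>S. if v\<in>g then z g else 0) = z g * card (S \<inter> g)" by simp
  qed
  also have "\<dots> = (\<Sum>g\<in>edges n. (if card (g\<inter>S) = 1 then z g else 0) + 2 * (if g\<subseteq>S then z g else 0))"
  proof (rule sum.cong[OF refl])
    fix g assume g: "g \<in> edges n"
    then have cg: "card g = 2" and fg: "finite g" by (auto simp: edges_def intro: card_ge_0_finite)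
    show "z g * card (S \<inter> g) = (if card (g\<inter>S) = 1 then z g else 0) + 2 * (if g\<subseteq>S then z g else 0)"
    proof (cases "g \<subseteq> S")
      case True
      then have "S \<inter> g = g" by auto
      then show ?thesis using cg True by (simp add: Int_commute)
    next
      case False
      then have "g \<inter> S \<subset> g" by auto
      then have "card (g \<inter> S) < 2" using psubset_card_mono[OF fg, of "g \<inter> S"] cg by simp
      then have "card (g \<inter> S) = 0 \<or> card (g \<inter> S) = 1" by linarith
      then show ?thesis using False by (auto simp: Int_commute)
    qed
  qed
  also have "\<dots> = xsum z (delta n S) + 2 * sum z {g\<in>edges n. g\<subseteq>S}"
    using fin by (simp add: sum.distrib xsum_def delta_def sum.inter_filter sum_distrib_left[symmetric])
  finally show ?thesis by simp
qed

lemma pm_unique: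
  assumes "perfect_matching n M" "g \<in> M" "h \<in> M" "x \<in> g" "x \<in> h"
  shows "g = h"
proof -
  have "M \<subseteq> edges n" using assms(1) unfolding perfect_matching_def by simp
  then have "g \<subseteq> verts n" using assms(2) unfolding edges_def by auto
  then have "x \<in> verts n" using assms(4) by blast
  then have "card {e\<in>M. x \<in> e} = 1" using assms(1) unfolding perfect_matching_def by simp
  then obtain a where a: "{e\<in>M. x \<in> e} = {a}" by (rule card_1_singletonE)
  have "g \<in> {e\<in>M. x \<in> e}" "h \<in> {e\<in>M. x \<in> e}" using assms by simp_all
  then show ?thesis unfolding a by simp
qed

lemma pm_edge:
  assumes "perfect_matching n M" "g \<in> M"
  shows "g \<in> edges n" "card g = 2" "g \<subseteq> verts n"
proof -
  show ge: "g \<in> edges n" using assms unfolding perfect_matching_def by blast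
  then show "card g = 2" "g \<subseteq> verts n" unfolding edges_def by simp_all
qed

lemma pm_exists:
  assumes "perfect_matching n M" "x \<in> verts n"
  shows "\<exists>p. {x,p} \<in> M \<and> p \<noteq> x"
proof -
  have "card {e\<in>M. x \<in> e} = 1" using assms unfolding perfect_matching_def by blast
  then obtain a where a: "{e\<in>M. x \<in> e} = {a}" by (rule card_1_singletonE)
  then have aM: "a \<in> M" "x \<in> a" by auto
  then have "card a = 2" using pm_edge(2)[OF assms(1)] by blast
  then obtain p q where "a = {p,q}" "p \<noteq> q" by (meson card_2_iff)
  then have "x = p \<or> x = q" using aM by auto
  then show ?thesis
  proof
    assume "x = p" then show ?thesis using \<open>a = {p,q}\<close> \<open>p \<noteq> q\<close> aM by blast
  next
    assume "x = q" then have "{x,p} = a" using \<open>a = {p,q}\<close> by auto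
    then show ?thesis using \<open>p \<noteq> q\<close> \<open>x = q\<close> aM by blast
  qed
qed

lemma pm_diff_ne:
  assumes "perfect_matching n M1" "perfect_matching n M2" "M1 \<noteq> M2"
  shows "M1 - M2 \<noteq> {}"
proof
  assume "M1 - M2 = {}"
  then have sub: "M1 \<subseteq> M2" by auto
  have "M2 \<subseteq> M1"
  proof
    fix h assume h: "h \<in> M2"
    then have "card h = 2" "h \<subseteq> verts n" using pm_edge[OF assms(2)] by auto
    then obtain p0 q0 where "h = {p0,q0}" by (meson card_2_iff)
    then have x: "p0 \<in> h" "p0 \<in> verts n" using \<open>h \<subseteq> verts n\<close> by auto
    define x where "x = p0"
    note x = x[folded x_def]
    obtain p where "{x,p} \<in> M1" using pm_exists[OF assms(1) x(2)] by blast
    then have "{x,p} = h" using pm_unique[OF assms(2) _ h, of "{x,p}" x] sub x by auto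
    then show "h \<in> M1" using \<open>{x,p} \<in> M1\<close> by simp
  qed
  then show False using sub assms(3) by auto
qed

lemma sum_two:
  assumes "finite T" "e0 \<in> T" "f0 \<in> T" "e0 \<noteq> f0" "\<forall>g\<in>T. z g \<noteq> 0 \<longrightarrow> g = e0 \<or> g = f0"
  shows "sum z T = z e0 + z f0"
proof -
  have "sum z T = sum z {e0,f0}"
  proof (rule sum.mono_neutral_right)
    show "finite T" "{e0,f0} \<subseteq> T" using assms by auto
    show "\<forall>i\<in>T - {e0, f0}. z i = 0" using assms(5) by blast
  qed
  then show ?thesis using assms by simp
qed

lemma chi_deg:
  assumes "perfect_matching n M" "v \<in> verts n"
  shows "xsum (chi M) (delta n {v}) = 1"
proof -
  have fin: "finite {g\<in>edges n. v\<in>g}" using finite_edges by simp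
  have Me: "M \<subseteq> edges n" using assms(1) unfolding perfect_matching_def by simp
  have "xsum (chi M) (delta n {v}) = (\<Sum>g\<in>{g\<in>edges n. v\<in>g}. if g \<in> M then 1 else 0)"
    by (simp add: xsum_def delta1 chi_def)
  also have "\<dots> = sum (\<lambda>_. 1) {g\<in>{g\<in>edges n. v\<in>g}. g \<in> M}"
    using sum.inter_filter[OF fin, of "\<lambda>_. (1::real)" "\<lambda>g. g \<in> M"] by simp
  also have "{g\<in>{g\<in>edges n. v\<in>g}. g \<in> M} = {e\<in>M. v \<in> e}" using Me by auto
  also have "sum (\<lambda>_. (1::real)) {e\<in>M. v \<in> e} = 1" using assms unfolding perfect_matching_def by simp
  finally show ?thesis by simp
qed

lemma inside:
  assumes pm: "perfect_matching n M" and g: "g \<in> M" "g \<subseteq> e \<union> f \<union> {w}"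
    and e: "e \<in> M" and f: "f \<notin> M" "card f = 2"
    and wf: "\<forall>x\<in>f. \<forall>h\<in>M. x \<in> h \<longrightarrow> w \<notin> h"
  shows "g = e"
proof (cases "g \<inter> e = {}")
  case False
  then obtain x where "x \<in> g" "x \<in> e" by blast
  then show ?thesis using pm_unique[OF pm g(1) e] by blast
next
  case True
  have cg: "card g = 2" using pm_edge[OF pm g(1)] by simp
  show ?thesis
  proof (cases "w \<in> g")
    case True
    obtain a b where ab: "g = {a,b}" "a \<noteq> b" using cg by (meson card_2_iff)
    have "\<exists>x\<in>g. x \<noteq> w"
    proof (cases "a = w")
      case True then show ?thesis using ab by auto
    next
      case False then show ?thesis using ab by auto
    qed
    then obtain x where x: "x \<in> g" "x \<noteq> w" by blast
    then have "x \<in> f" using g(2) \<open>g \<inter> e = {}\<close> by blast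
    then show ?thesis using wf g(1) x True by blast
  next
    case False
    then have "g \<subseteq> f" using g(2) \<open>g \<inter> e = {}\<close> by blast
    then have "g = f" using card_subset_eq[of f g] f(2) cg by (metis card.infinite zero_neq_numeral)
    then show ?thesis using f g by simp
  qed
qed

theorem lemma5:
  fixes n :: nat and M1 M2 :: "nat set set"
  assumes "even n" and "n \<ge> 10"
    and "perfect_matching n M1" and "perfect_matching n M2" and "M1 \<noteq> M2"
  shows "is_circuit n (\<lambda>e. chi M1 e - chi M2 e)"
proof -
  define c where "c = (\<lambda>e. chi M1 e - chi M2 e)"
  note pm1 = assms(3) and pm2 = assms(4)
  have M1e: "M1 \<subseteq> edges n" using pm1 unfolding perfect_matching_def by simp
  have M2e: "M2 \<subseteq> edges n" using pm2 unfolding perfect_matching_def by simp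
  have c1: "\<And>e. e \<in> M1 - M2 \<Longrightarrow> c e = 1" by (simp add: c_def chi_def)
  have c2: "\<And>e. e \<in> M2 - M1 \<Longrightarrow> c e = -1" by (simp add: c_def chi_def)
  have c0: "\<And>e. c e \<noteq> 0 \<Longrightarrow> e \<in> (M1 - M2) \<union> (M2 - M1)"
    by (auto simp: c_def chi_def split: if_splits)
  have ne1: "M1 - M2 \<noteq> {}" using pm_diff_ne[OF pm1 pm2 assms(5)] .
  have ne2: "M2 - M1 \<noteq> {}" using pm_diff_ne[OF pm2 pm1] assms(5) by metis
  have kc: "in_ker n c"
    unfolding in_ker_def is_vec_def
  proof (intro conjI allI impI ballI)
    fix e assume "e \<notin> edges n"
    then show "c e = 0" using M1e M2e by (auto simp: c_def chi_def)
  next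
    fix v assume v: "v \<in> verts n"
    have "xsum c (delta n {v}) = xsum (chi M1) (delta n {v}) - xsum (chi M2) (delta n {v})"
      by (simp add: xsum_def c_def sum_subtractf)
    then show "xsum c (delta n {v}) = 0" using chi_deg[OF pm1 v] chi_deg[OF pm2 v] by simp
  qed
  have cnz: "c \<noteq> (\<lambda>_. 0)"
  proof
    assume "c = (\<lambda>_. 0)"
    moreover obtain e where "e \<in> M1 - M2" using ne1 by blast
    ultimately show False using c1 by fastforce
  qed
  have noy: "\<not> (\<exists>y. in_ker n y \<and> y \<noteq> (\<lambda>_. 0) \<and> supp_B n y \<subset> supp_B n c)"
  proof
    assume "\<exists>y. in_ker n y \<and> y \<noteq> (\<lambda>_. 0) \<and> supp_B n y \<subset> supp_B n c"
    then obtain y where ky0: "in_ker n y" and ynz: "y \<noteq> (\<lambda>_. 0)" and ss: "supp_B n y \<subset> supp_B n c"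
      by blast
    have vy: "is_vec n y" and ky: "\<forall>v\<in>verts n. xsum y (delta n {v}) = 0"
      using ky0 unfolding in_ker_def by auto
    have ysupp: "\<And>e. y e \<noteq> 0 \<Longrightarrow> e \<in> (M1 - M2) \<union> (M2 - M1)"
    proof -
      fix e assume ye: "y e \<noteq> 0"
      then have "e \<in> edges n" using vy unfolding is_vec_def by blast
      then have "Inr e \<in> supp_B n y" using ye by (simp add: supp_B_def ineq_rows_def)
      then have "Inr e \<in> supp_B n c" using ss by blast
      then have "c e \<noteq> 0" by (simp add: supp_B_def)
      then show "e \<in> (M1 - M2) \<union> (M2 - M1)" by (rule c0)
    qed
    have "\<exists>e0\<in>M1 - M2. \<exists>f0\<in>M2 - M1. y e0 + y f0 \<noteq> 0"
    proof (rule ccontr)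
      assume H: "\<not> (\<exists>e0\<in>M1 - M2. \<exists>f0\<in>M2 - M1. y e0 + y f0 \<noteq> 0)"
      obtain e1 where e1: "e1 \<in> M1 - M2" using ne1 by blast
      obtain f1 where f1: "f1 \<in> M2 - M1" using ne2 by blast
      define a where "a = y e1"
      have yac: "y = (\<lambda>e. a * c e)"
      proof
        fix e
        show "y e = a * c e"
        proof (cases "e \<in> M1 - M2")
          case True
          have "y e + y f1 = 0" "y e1 + y f1 = 0" using H e1 f1 True by auto
          then show ?thesis using c1[OF True] unfolding a_def by simp
        next
          case False
          show ?thesis
          proof (cases "e \<in> M2 - M1")
            case True
            have "y e1 + y e = 0" using H e1 True by auto
            then show ?thesis using c2[OF True] unfolding a_def by simp
          next
            case False2: False
            then have "y e = 0" "c e = 0" using ysupp c0 False by blast+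
            then show ?thesis by simp
          qed
        qed
      qed
      have "a \<noteq> 0" using ynz yac by auto
      have "\<And>r. row_val n y r = a * row_val n c r"
      proof -
        fix r show "row_val n y r = a * row_val n c r"
          by (cases r) (simp_all add: yac xsum_def sum_distrib_left)
      qed
      then have "supp_B n y = supp_B n c" using \<open>a \<noteq> 0\<close> by (simp add: supp_B_def)
      then show False using ss by simp
    qed
    then obtain e0 f0 where e0: "e0 \<in> M1 - M2" and f0: "f0 \<in> M2 - M1" and yef: "y e0 + y f0 \<noteq> 0"
      by blast
    have e0f0: "e0 \<noteq> f0" using e0 f0 by blast
    obtain u v where uv: "e0 = {u,v}" "u \<noteq> v" using pm_edge(2)[OF pm1, of e0] e0 by (meson DiffD1 card_2_iff)
    obtain u' v' where uv': "f0 = {u',v'}" "u' \<noteq> v'" using pm_edge(2)[OF pm2, of f0] f0 by (meson DiffD1 card_2_iff)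
    have e0v: "e0 \<subseteq> verts n" using pm_edge(3)[OF pm1, of e0] e0 by blast
    have f0v: "f0 \<subseteq> verts n" using pm_edge(3)[OF pm2, of f0] f0 by blast
    have disj: "e0 \<inter> f0 = {}"
    proof (rule ccontr)
      assume "e0 \<inter> f0 \<noteq> {}"
      then obtain x where x: "x \<in> e0" "x \<in> f0" by blast
      then have xv: "x \<in> verts n" using e0v by blast
      have "xsum y (delta n {x}) = sum y {g\<in>edges n. x\<in>g}" by (simp add: xsum_def delta1)
      also have "\<dots> = y e0 + y f0"
      proof (rule sum_two)
        show "finite {g\<in>edges n. x\<in>g}" using finite_edges by simp
        show "e0 \<in> {g\<in>edges n. x\<in>g}" using x e0 M1e by blast
        show "f0 \<in> {g\<in>edges n. x\<in>g}" using x f0 M2e by blast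
        show "e0 \<noteq> f0" by (rule e0f0)
        show "\<forall>g\<in>{g\<in>edges n. x\<in>g}. y g \<noteq> 0 \<longrightarrow> g = e0 \<or> g = f0"
        proof (intro ballI impI)
          fix g assume g: "g \<in> {g\<in>edges n. x\<in>g}" and "y g \<noteq> 0"
          then have "g \<in> (M1 - M2) \<union> (M2 - M1)" using ysupp by blast
          then show "g = e0 \<or> g = f0"
            using pm_unique[OF pm1, of g e0 x] pm_unique[OF pm2, of g f0 x] g x e0 f0 by blast
        qed
      qed
      finally show False using ky xv yef by simp
    qed
    have uvv: "u \<in> verts n" "v \<in> verts n" "u' \<in> verts n" "v' \<in> verts n"
      using e0v f0v uv uv' by auto
    obtain pu where pu: "{u,pu} \<in> M2" using pm_exists[OF pm2 uvv(1)] by blast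
    obtain pv where pv: "{v,pv} \<in> M2" using pm_exists[OF pm2 uvv(2)] by blast
    obtain pu' where pu': "{u',pu'} \<in> M1" using pm_exists[OF pm1 uvv(3)] by blast
    obtain pv' where pv': "{v',pv'} \<in> M1" using pm_exists[OF pm1 uvv(4)] by blast
    define F where "F = {u,v,u',v',pu,pv,pu',pv'}"
    have "card F \<le> 8" unfolding F_def
      using card_length[of "[u,v,u',v',pu,pv,pu',pv']"] by simp
    moreover have "card (verts n) = n" by (simp add: verts_def)
    ultimately have "\<not> verts n \<subseteq> F"
    proof -
      assume a1: "card F \<le> 8" and a2: "card (verts n) = n"
      show ?thesis
      proof
        assume "verts n \<subseteq> F"
        moreover have "finite F" by (simp add: F_def)
        ultimately have "card (verts n) \<le> card F" by (rule card_mono[rotated])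
        then show False using a1 a2 assms(2) by linarith
      qed
    qed
    then obtain w where w: "w \<in> verts n" "w \<notin> F" by blast
    define S where "S = e0 \<union> f0 \<union> {w}"
    have Sv: "S \<subseteq> verts n" using e0v f0v w by (auto simp: S_def)
    have Seq: "S = {u,v,u',v',w}" unfolding S_def using uv uv' by auto
    have d1: "u \<noteq> u'" "u \<noteq> v'" "v \<noteq> u'" "v \<noteq> v'" using disj uv uv' by auto
    have d2: "w \<noteq> u" "w \<noteq> v" "w \<noteq> u'" "w \<noteq> v'" using w(2) unfolding F_def by auto
    have cS: "card S = 5"
      unfolding Seq using d1 d2 uv(2) uv'(2) by simp
    have Sps: "S \<subset> verts n"
    proof -
      have "S \<noteq> verts n" using cS \<open>card (verts n) = n\<close> assms(2) by auto
      then show ?thesis using Sv by blast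
    qed
    have rowS: "Inl S \<in> ineq_rows n" using Sps cS by (simp add: ineq_rows_def)
    have wf1: "\<forall>x\<in>f0. \<forall>h\<in>M1. x \<in> h \<longrightarrow> w \<notin> h"
    proof (intro ballI impI)
      fix x h assume x: "x \<in> f0" and h: "h \<in> M1" "x \<in> h"
      have "x = u' \<or> x = v'" using x uv' by blast
      then show "w \<notin> h"
      proof
        assume "x = u'" then have "h = {u',pu'}" using pm_unique[OF pm1 h(1) pu'] h by blast
        then show ?thesis using w(2) by (auto simp: F_def)
      next
        assume "x = v'" then have "h = {v',pv'}" using pm_unique[OF pm1 h(1) pv'] h by blast
        then show ?thesis using w(2) by (auto simp: F_def)
      qed
    qed
    have wf2: "\<forall>x\<in>e0. \<forall>h\<in>M2. x \<in> h \<longrightarrow> w \<notin> h"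
    proof (intro ballI impI)
      fix x h assume x: "x \<in> e0" and h: "h \<in> M2" "x \<in> h"
      have "x = u \<or> x = v" using x uv by blast
      then show "w \<notin> h"
      proof
        assume "x = u" then have "h = {u,pu}" using pm_unique[OF pm2 h(1) pu] h by blast
        then show ?thesis using w(2) by (auto simp: F_def)
      next
        assume "x = v" then have "h = {v,pv}" using pm_unique[OF pm2 h(1) pv] h by blast
        then show ?thesis using w(2) by (auto simp: F_def)
      qed
    qed
    have cf0: "card f0 = 2" "card e0 = 2" using uv uv' by auto
    have ins: "\<And>g. g \<in> M1 \<union> M2 \<Longrightarrow> g \<subseteq> S \<Longrightarrow> g = e0 \<or> g = f0"
    proof -
      fix g assume g: "g \<in> M1 \<union> M2" "g \<subseteq> S"
      show "g = e0 \<or> g = f0"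
      proof (cases "g \<in> M1")
        case True
        have gs: "g \<subseteq> e0 \<union> f0 \<union> {w}" using g(2) unfolding S_def .
        have "e0 \<in> M1" "f0 \<notin> M1" using e0 f0 by auto
        then have "g = e0" using inside[OF pm1 True gs _ _ cf0(1) wf1] by blast
        then show ?thesis by simp
      next
        case False
        then have "g \<in> M2" using g by blast
        moreover have "g \<subseteq> f0 \<union> e0 \<union> {w}" using g(2) unfolding S_def by blast
        moreover have "f0 \<in> M2" "e0 \<notin> M2" using e0 f0 by auto
        ultimately have "g = f0" using inside[OF pm2 _ _ _ _ cf0(2) wf2] by blast
        then show ?thesis by simp
      qed
    qed
    have finS: "finite S" unfolding Seq by simp
    have e0S: "e0 \<in> {g\<in>edges n. g\<subseteq>S}" using e0 M1e by (auto simp: S_def)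
    have f0S: "f0 \<in> {g\<in>edges n. g\<subseteq>S}" using f0 M2e by (auto simp: S_def)
    have finT: "finite {g\<in>edges n. g\<subseteq>S}" using finite_edges by simp
    have sy: "sum y {g\<in>edges n. g\<subseteq>S} = y e0 + y f0"
      using sum_two[OF finT e0S f0S e0f0] ysupp ins by blast
    have sc: "sum c {g\<in>edges n. g\<subseteq>S} = c e0 + c f0"
      using sum_two[OF finT e0S f0S e0f0] c0 ins by blast
    have kcS: "\<forall>v\<in>S. xsum c (delta n {v}) = 0" using kc Sv unfolding in_ker_def by blast
    have kyS: "\<forall>v\<in>S. xsum y (delta n {v}) = 0" using ky Sv by blast
    have "xsum y (delta n S) = -2 * (y e0 + y f0)" using ident[OF finS kyS] sy by simp
    then have "Inl S \<in> supp_B n y" using rowS yef by (simp add: supp_B_def)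
    moreover have "xsum c (delta n S) = 0" using ident[OF finS kcS] sc c1[OF e0] c2[OF f0] by simp
    then have "Inl S \<notin> supp_B n c" by (simp add: supp_B_def)
    ultimately show False using ss by blast
  qed
  show ?thesis using kc cnz noy unfolding is_circuit_def c_def by blast
qed

end
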